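(* Let $G$ be a $2$-connected (finite, simple) graph with pathwidth $p$. Then every edge of $G$ is contained in a bond $F$ of $G$ such that $p \le 3|F|-2$. In particular, if $G$ has cocircumference $k$, then $\mathrm{pw}(G)\le 3k-2$.
   Context: A bond of a graph $G$ is an inclusion-wise minimal set of edges $F$ such that $G-F$ has more connected components than $G$. The cocircumference of a graph with at least one edge is the maximum size of a bond. A tree-decomposition of $G$ is a family $\{X_u : u\in V(T)\}$ of subsets of $V(G)$ indexed by the nodes of a tree $T$ such that for every $x\in V(G)$ the nodes $u$ with $x\in X_u$ induce a non-empty subtree of $T$, and every edge $xy$ of $G$ satisfies $\{x,y\}\subseteq X_u$ for some $u$; its width is $\max_u |X_u|-1$. A path-decomposition is a tree-decomposition where $T$ is a path, written as a sequence of bags $(X_0,\dots,X_s)$; the pathwidth $\mathrm{pw}(G)$ is the minimum width of a path-decomposition of $G$. *)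

theory Defs
  imports Main
begin

definition simple_graph :: "'a set \<Rightarrow> 'a set set \<Rightarrow> bool" where
  "simple_graph V E \<longleftrightarrow> finite V \<and> (\<forall>e\<in>E. \<exists>x y. e = {x, y} \<and> x \<in> V \<and> y \<in> V \<and> x \<noteq> y)"

definition reach :: "'a set set \<Rightarrow> 'a \<Rightarrow> 'a \<Rightarrow> bool" where
  "reach E = (\<lambda>x y. {x, y} \<in> E)\<^sup>*\<^sup>*"

definition components :: "'a set \<Rightarrow> 'a set set \<Rightarrow> 'a set set" where
  "components V E = {{y \<in> V. reach E x y} | x. x \<in> V}"

definition num_components :: "'a set \<Rightarrow> 'a set set \<Rightarrow> nat" where
  "num_components V E = card (components V E)"

definition connected_graph :: "'a set \<Rightarrow> 'a set set \<Rightarrow> bool" where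
  "connected_graph V E \<longleftrightarrow> V \<noteq> {} \<and> (\<forall>x\<in>V. \<forall>y\<in>V. reach E x y)"

definition two_connected :: "'a set \<Rightarrow> 'a set set \<Rightarrow> bool" where
  "two_connected V E \<longleftrightarrow> card V \<ge> 3 \<and> connected_graph V E \<and>
     (\<forall>v\<in>V. connected_graph (V - {v}) {e \<in> E. v \<notin> e})"

definition disconnecting :: "'a set \<Rightarrow> 'a set set \<Rightarrow> 'a set set \<Rightarrow> bool" where
  "disconnecting V E F \<longleftrightarrow> F \<subseteq> E \<and> num_components V (E - F) > num_components V E"

definition bond :: "'a set \<Rightarrow> 'a set set \<Rightarrow> 'a set set \<Rightarrow> bool" where
  "bond V E F \<longleftrightarrow> disconnecting V E F \<and> (\<forall>F'. F' \<subset> F \<longrightarrow> \<not> disconnecting V E F')"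

definition cocircumference :: "'a set \<Rightarrow> 'a set set \<Rightarrow> nat" where
  "cocircumference V E = Max {card F | F. bond V E F}"

definition path_decomposition :: "'a set \<Rightarrow> 'a set set \<Rightarrow> 'a set list \<Rightarrow> bool" where
  "path_decomposition V E Xs \<longleftrightarrow> Xs \<noteq> [] \<and> (\<forall>X\<in>set Xs. X \<subseteq> V) \<and>
     (\<forall>x\<in>V. (\<exists>i<length Xs. x \<in> Xs ! i) \<and>
        (\<forall>i j k. i \<le> j \<and> j \<le> k \<and> k < length Xs \<and> x \<in> Xs ! i \<and> x \<in> Xs ! k \<longrightarrow> x \<in> Xs ! j)) \<and>
     (\<forall>e\<in>E. \<exists>i<length Xs. e \<subseteq> Xs ! i)"

definition pd_width :: "'a set list \<Rightarrow> nat" where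
  "pd_width Xs = Max (card ` set Xs) - 1"

definition pathwidth :: "'a set \<Rightarrow> 'a set set \<Rightarrow> nat" where
  "pathwidth V E = (LEAST w. \<exists>Xs. path_decomposition V E Xs \<and> pd_width Xs = w)"

end

theory Submission
  imports Defs
begin


definition ind :: "'a set set \<Rightarrow> 'a set \<Rightarrow> 'a set set" where
  "ind E W = {e\<in>E. e \<subseteq> W}"
definition conn :: "'a set set \<Rightarrow> 'a set \<Rightarrow> bool" where
  "conn E W \<longleftrightarrow> (\<forall>x\<in>W. \<forall>y\<in>W. reach (ind E W) x y)"
definition cut :: "'a set set \<Rightarrow> 'a set \<Rightarrow> 'a set set" where
  "cut E A = {e\<in>E. e \<inter> A \<noteq> {} \<and> \<not> e \<subseteq> A}"

lemma fin_argmax: assumes "finite S" "S\<noteq>{}" shows "\<exists>x\<in>S. \<forall>y\<in>S. (f y::nat) \<le> f x"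
proof -
  have "Max (f`S) \<in> f`S" using assms by simp
  then obtain x where "x \<in> S" "f x = Max (f`S)" by auto
  moreover have "\<forall>y\<in>S. f y \<le> Max (f`S)" using assms(1) by simp
  ultimately show ?thesis by metis
qed

lemma reach_refl: "reach E x x" unfolding reach_def by simp

lemma reach_sym: assumes "reach E x y" shows "reach E y x"
  using assms unfolding reach_def
proof (induction rule: rtranclp.induct)
  case (rtrancl_refl a) then show ?case by simp
next
  case (rtrancl_into_rtrancl a b c)
  have "{c,b} \<in> E" using rtrancl_into_rtrancl(2) by (simp add: insert_commute)
  then show ?case using rtrancl_into_rtrancl(3)
    by (rule converse_rtranclp_into_rtranclp[where r="\<lambda>x y. {x,y}\<in>E"])
qed

lemma reach_trans: "reach E x y \<Longrightarrow> reach E y z \<Longrightarrow> reach E x z"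
  unfolding reach_def by (rule rtranclp_trans)

lemma reach_edge: "{x,y} \<in> E \<Longrightarrow> reach E x y"
  unfolding reach_def by (rule r_into_rtranclp[where r="\<lambda>x y. {x,y}\<in>E"])

lemma reach_step: "reach E x y \<Longrightarrow> {y,z} \<in> E \<Longrightarrow> reach E x z"
  unfolding reach_def by (rule rtranclp.rtrancl_into_rtrancl[where r="\<lambda>x y. {x,y}\<in>E"])

lemma reach_mono: assumes "reach E1 x y" "E1 \<subseteq> E2" shows "reach E2 x y"
proof -
  have "(\<lambda>x y. {x,y}\<in>E1)\<^sup>*\<^sup>* \<le> (\<lambda>x y. {x,y}\<in>E2)\<^sup>*\<^sup>*"
    by (rule rtranclp_mono) (use assms(2) in auto)
  then show ?thesis using assms(1) unfolding reach_def le_fun_def by auto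
qed

lemma crossing: assumes "reach E x y" "x \<in> A" "y \<notin> A"
  shows "\<exists>a b. {a,b} \<in> E \<and> a \<in> A \<and> b \<notin> A"
  using assms unfolding reach_def
  by (induction rule: rtranclp_induct) auto

lemma reach_ind_in: assumes "reach (ind E W) x y" "x \<in> W" shows "y \<in> W"
  using assms unfolding reach_def
  by (induction rule: rtranclp_induct) (auto simp: ind_def)

lemma comp_reach: assumes "reach (ind E W) x y" "x \<in> W"
  shows "reach (ind E {z\<in>W. reach (ind E W) x z}) x y"
proof -
  have "(\<lambda>a b. {a,b} \<in> ind E W)\<^sup>*\<^sup>* x y" using assms(1) unfolding reach_def .
  then show ?thesis
  proof (induction rule: rtranclp_induct)
    case base then show ?case by (simp add: reach_refl)
  next
    case (step b c)
    have rb: "reach (ind E W) x b" using step(1) unfolding reach_def .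
    have b: "b \<in> W" by (rule reach_ind_in[OF rb assms(2)])
    have c: "c \<in> W" using step(2) by (auto simp: ind_def)
    have "reach (ind E W) x c" by (rule reach_step[OF rb step(2)])
    then have "{b,c} \<in> ind E {z\<in>W. reach (ind E W) x z}"
      using step(2) b c rb by (auto simp: ind_def)
    then show ?case by (rule reach_step[OF step(3)])
  qed
qed

lemma conn_root: assumes "\<forall>x\<in>W. reach (ind E W) r x" shows "conn E W"
  unfolding conn_def
proof (intro ballI)
  fix x y assume "x \<in> W" "y \<in> W"
  then have 1: "reach (ind E W) r x" and 2: "reach (ind E W) r y" using assms by simp_all
  from 1 have "reach (ind E W) x r" by (rule reach_sym)
  from this 2 show "reach (ind E W) x y" by (rule reach_trans)
qed

lemma edge_in: assumes "simple_graph V E" "{a,b} \<in> E" shows "a \<in> V \<and> b \<in> V \<and> a \<noteq> b"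
proof -
  from assms(1) have "\<forall>e\<in>E. \<exists>x y. e = {x, y} \<and> x \<in> V \<and> y \<in> V \<and> x \<noteq> y"
    by (simp add: simple_graph_def)
  then have "\<exists>x y. {a,b} = {x, y} \<and> x \<in> V \<and> y \<in> V \<and> x \<noteq> y" by (rule bspec[OF _ assms(2)])
  then obtain x y where xy: "{a,b} = {x,y}" "x \<in> V" "y \<in> V" "x \<noteq> y" by blast
  have "a \<in> {a,b}" "b \<in> {a,b}" by simp_all
  then have ab: "a \<in> {x,y}" "b \<in> {x,y}" using xy(1) by simp_all
  have "x \<in> {a,b}" "y \<in> {a,b}" using xy(1) by simp_all
  then have "a \<noteq> b" using xy(4) by auto
  then show ?thesis using xy ab by auto
qed

lemma edge_form: assumes "simple_graph V E" "e \<in> E" shows "\<exists>a b. e = {a,b} \<and> a \<in> V \<and> b \<in> V \<and> a \<noteq> b"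
proof -
  from assms(1) have "\<forall>e\<in>E. \<exists>x y. e = {x, y} \<and> x \<in> V \<and> y \<in> V \<and> x \<noteq> y"
    by (simp add: simple_graph_def)
  then show ?thesis by (rule bspec[OF _ assms(2)])
qed

lemma edge_sub: assumes "simple_graph V E" "e \<in> E" shows "e \<subseteq> V"
proof -
  obtain a b where "e = {a,b}" "a \<in> V" "b \<in> V" using edge_form[OF assms] by blast
  then show ?thesis by simp
qed

lemma finE: assumes "simple_graph V E" shows "finite E"
proof (rule finite_subset[of E "Pow V"])
  show "E \<subseteq> Pow V" using assms unfolding simple_graph_def by auto
  show "finite (Pow V)" using assms unfolding simple_graph_def by simp
qed

lemma conn_empty: "conn E {}" by (simp add: conn_def)

lemma ind_V: "simple_graph V E \<Longrightarrow> ind E V = E"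
  unfolding ind_def simple_graph_def by auto

lemma conn_V: "simple_graph V E \<Longrightarrow> connected_graph V E \<Longrightarrow> conn E V"
  unfolding conn_def connected_graph_def by (simp add: ind_V)

lemma components_conn: assumes "connected_graph V E" shows "components V E = {V}"
  using assms unfolding connected_graph_def components_def by auto



lemma tc_conn_minus:
  assumes sg: "simple_graph V E" and tc: "two_connected V E" and w: "w \<in> V"
    and x: "x \<in> V" "x \<noteq> w" and y: "y \<in> V" "y \<noteq> w"
  shows "reach {e\<in>E. w \<notin> e} x y"
proof -
  have "connected_graph (V - {w}) {e \<in> E. w \<notin> e}" using tc w unfolding two_connected_def by blast
  then show ?thesis using x y unfolding connected_graph_def by blast
qed

lemma extend:
  assumes sg: "simple_graph V E" and tc: "two_connected V E"
    and SV: "S \<subseteq> V" and uS: "u \<in> S" and vT: "v \<in> V - S"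
    and cS: "conn E S" and cT: "conn E (V - S)" and ne: "V - S \<noteq> {v}"
  shows "\<exists>w\<in>V-S-{v}. conn E (S\<union>{w}) \<and> conn E (V-S-{w})"
proof -
  define T where "T = V - S"
  have finV: "finite V" using sg unfolding simple_graph_def by simp
  define cv where "cv w = {y \<in> T - {w}. reach (ind E (T-{w})) v y}" for w
  define W0 where "W0 = {w \<in> T - {v}. \<exists>s\<in>S. {s,w}\<in>E}"
  have uV: "u \<in> V" using SV uS by blast
  have vS: "v \<notin> S" "v \<in> V" using vT by auto
  have W0ne: "W0 \<noteq> {}"
  proof -
    obtain t where t: "t \<in> T" "t \<noteq> v" using ne vT unfolding T_def by blast
    have "reach {e\<in>E. v \<notin> e} u t"
      using tc_conn_minus[OF sg tc vS(2) uV _ , of t] uS vS t unfolding T_def by auto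
    then obtain a b where ab: "{a,b} \<in> {e\<in>E. v \<notin> e}" "a \<in> S" "b \<notin> S"
      using crossing[of _ u t S] uS t unfolding T_def by blast
    have "b \<in> V" using edge_in[OF sg, of a b] ab(1) by simp
    then have "b \<in> W0" using ab unfolding W0_def T_def by auto
    then show ?thesis by blast
  qed
  have finW0: "finite W0" using finV unfolding W0_def T_def by simp
  obtain w where wW0: "w \<in> W0" and wmax: "\<forall>w'\<in>W0. card (cv w') \<le> card (cv w)"
    using fin_argmax[OF finW0 W0ne, of "\<lambda>w. card (cv w)"] by blast
  from wW0 obtain s where wT: "w \<in> T" "w \<noteq> v" and s: "s \<in> S" "{s,w}\<in>E"
    unfolding W0_def by blast
  have c1: "conn E (S \<union> {w})"
  proof (rule conn_root[where r=s])
    have sw: "{s,w} \<in> ind E (S\<union>{w})" using s unfolding ind_def by auto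
    have "ind E S \<subseteq> ind E (S\<union>{w})" unfolding ind_def by auto
    then have "\<forall>x\<in>S. reach (ind E (S\<union>{w})) s x"
      using cS s(1) unfolding conn_def by (blast intro: reach_mono)
    moreover have "reach (ind E (S\<union>{w})) s w" using sw by (rule reach_edge)
    ultimately show "\<forall>x\<in>S \<union> {w}. reach (ind E (S \<union> {w})) s x" by blast
  qed
  have c2: "conn E (T - {w})"
  proof (rule conn_root[where r=v], rule ccontr)
    assume "\<not> (\<forall>x\<in>T - {w}. reach (ind E (T - {w})) v x)"
    then obtain z where z: "z \<in> T - {w}" "\<not> reach (ind E (T - {w})) v z" by blast
    define K where "K = {y\<in>T-{w}. reach (ind E (T-{w})) z y}"
    have vK: "v \<notin> K"
    proof
      assume "v \<in> K"
      then have "reach (ind E (T-{w})) z v" unfolding K_def by simp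
      then have "reach (ind E (T-{w})) v z" by (rule reach_sym)
      then show False using z(2) by simp
    qed
    have zK: "z \<in> K" using z unfolding K_def by (simp add: reach_refl)
    have "reach {e\<in>E. w \<notin> e} z u"
      using tc_conn_minus[OF sg tc, of w z u] z uV uS wT unfolding T_def by auto
    moreover have "u \<notin> K" using uS unfolding K_def T_def by auto
    ultimately obtain a b where ab: "{a,b} \<in> {e\<in>E. w \<notin> e}" "a \<in> K" "b \<notin> K"
      using crossing[of _ z u K] zK by blast
    have bV: "b \<in> V" and aV: "a \<in> V" using edge_in[OF sg, of a b] ab(1) by simp_all
    have aT: "a \<in> T - {w}" using ab(2) unfolding K_def by simp
    have bw: "b \<noteq> w" using ab(1) by auto
    have bS: "b \<in> S"
    proof (rule ccontr)
      assume "b \<notin> S"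
      then have bT: "b \<in> T - {w}" using bV bw unfolding T_def by simp
      have "{a,b} \<in> ind E (T - {w})" using ab(1) aT bT unfolding ind_def by simp
      moreover have "reach (ind E (T-{w})) z a" using ab(2) unfolding K_def by simp
      ultimately have "reach (ind E (T-{w})) z b" by (rule reach_step[rotated])
      then have "b \<in> K" using bT unfolding K_def by simp
      then show False using ab(3) by simp
    qed
    have av: "a \<noteq> v" using ab(2) vK by blast
    have aW0: "a \<in> W0" using aT av bS ab(1) unfolding W0_def by (auto simp: insert_commute)
    have a_ncv: "a \<notin> cv w"
    proof
      assume "a \<in> cv w"
      then have "reach (ind E (T-{w})) v a" unfolding cv_def by simp
      moreover have "reach (ind E (T-{w})) z a"
        using ab(2) unfolding K_def by simp
      then have "reach (ind E (T-{w})) a z" by (rule reach_sym)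
      ultimately have "reach (ind E (T-{w})) v z" by (rule reach_trans)
      then show False using z(2) by simp
    qed
    have sub1: "cv w \<subseteq> cv a"
    proof
      fix y assume y: "y \<in> cv w"
      have vTw: "v \<in> T - {w}" using vT wT unfolding T_def by auto
      have r: "reach (ind E (T-{w})) v y" using y unfolding cv_def by simp
      have "reach (ind E (cv w)) v y" using comp_reach[OF r vTw] unfolding cv_def by simp
      moreover have "ind E (cv w) \<subseteq> ind E (T - {a})"
        using a_ncv unfolding ind_def cv_def by auto
      ultimately have "reach (ind E (T - {a})) v y" by (rule reach_mono)
      moreover have "y \<in> T - {a}" using y a_ncv unfolding cv_def by auto
      ultimately show "y \<in> cv a" unfolding cv_def by simp
    qed
    have vcv: "v \<in> cv w" using vT wT unfolding cv_def T_def by (auto simp: reach_refl)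
    have wcv: "w \<notin> cv w" unfolding cv_def by simp
    have "reach (ind E T) v w" using cT vT wT unfolding conn_def T_def by simp
    then obtain c d where cd: "{c,d} \<in> ind E T" "c \<in> cv w" "d \<notin> cv w"
      using crossing[of _ v w "cv w"] vcv wcv by blast
    have dT: "d \<in> T" and cTw: "c \<in> T - {w}" using cd unfolding ind_def cv_def by auto
    have dw: "d = w"
    proof (rule ccontr)
      assume "d \<noteq> w"
      then have "{c,d} \<in> ind E (T - {w})" using cd(1) dT cTw unfolding ind_def by auto
      moreover have "reach (ind E (T-{w})) v c" using cd(2) unfolding cv_def by simp
      ultimately have "reach (ind E (T-{w})) v d" by (rule reach_step[rotated])
      then have "d \<in> cv w" using dT \<open>d \<noteq> w\<close> unfolding cv_def by simp
      then show False using cd(3) by simp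
    qed
    have ca: "c \<in> cv a" using sub1 cd(2) by blast
    have aw: "a \<noteq> w" using aT by simp
    have "{c,w} \<in> ind E (T - {a})"
      using cd(1) dw ca wT aw unfolding ind_def cv_def by auto
    moreover have "reach (ind E (T-{a})) v c" using ca unfolding cv_def by simp
    ultimately have "reach (ind E (T-{a})) v w" by (rule reach_step[rotated])
    then have "w \<in> cv a" using wT aw unfolding cv_def by simp
    then have "insert w (cv w) \<subseteq> cv a" using sub1 by blast
    moreover have "finite (cv a)" using finV unfolding cv_def T_def by simp
    ultimately have "card (insert w (cv w)) \<le> card (cv a)" by (rule card_mono[rotated])
    moreover have "card (insert w (cv w)) = Suc (card (cv w))"
      using wcv finV unfolding cv_def T_def by simp
    moreover have "card (cv a) \<le> card (cv w)" using wmax aW0 by blast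
    ultimately show False by simp
  qed
  show ?thesis using c1 c2 wT unfolding T_def by blast
qed



lemma build:
  assumes sg: "simple_graph V E" and tc: "two_connected V E"
  shows "card (V - S) = N \<Longrightarrow> u \<in> S \<Longrightarrow> S \<subseteq> V \<Longrightarrow> v \<in> V - S \<Longrightarrow> conn E S \<Longrightarrow> conn E (V - S) \<Longrightarrow>
    \<exists>ws. distinct ws \<and> set ws = V - S \<and>
      (\<forall>k. conn E (S \<union> set (take k ws)) \<and> conn E (V - (S \<union> set (take k ws)))) \<and>
      (\<forall>k<length ws. v \<notin> set (take k ws))"
proof (induction N arbitrary: S rule: less_induct)
  case (less N S)
  have finV: "finite V" using sg unfolding simple_graph_def by simp
  have cV: "conn E V" using conn_V[OF sg] tc unfolding two_connected_def by blast
  show ?case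
  proof (cases "V - S = {v}")
    case True
    have SvV: "S \<union> {v} = V" using True less.prems(3) by blast
    have "\<forall>k. conn E (S \<union> set (take k [v])) \<and> conn E (V - (S \<union> set (take k [v])))"
    proof
      fix k show "conn E (S \<union> set (take k [v])) \<and> conn E (V - (S \<union> set (take k [v])))"
      proof (cases k)
        case 0 then show ?thesis using less.prems by simp
      next
        case (Suc k') then show ?thesis using SvV cV conn_empty by simp
      qed
    qed
    then show ?thesis using True by (intro exI[of _ "[v]"]) auto
  next
    case False
    obtain w where w: "w \<in> V - S - {v}" and c1: "conn E (S \<union> {w})" and c2: "conn E (V - S - {w})"
      using extend[OF sg tc less.prems(3,2,4,5,6) False] by blast
    let ?S = "S \<union> {w}"
    have eq: "V - ?S = V - S - {w}" by blast
    have "card (V - S - {w}) < card (V - S)"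
      using w finV by (intro card_Diff1_less) auto
    then have lt: "card (V - ?S) < N" using less.prems(1) unfolding eq by simp
    obtain ws where ws: "distinct ws" "set ws = V - ?S"
        "\<forall>k. conn E (?S \<union> set (take k ws)) \<and> conn E (V - (?S \<union> set (take k ws)))"
        "\<forall>k<length ws. v \<notin> set (take k ws)"
      using less.IH[OF lt refl] less.prems w c1 c2 eq by auto
    have "distinct (w # ws)" using ws(1,2) by simp
    moreover have "set (w # ws) = V - S" using ws(2) w by auto
    moreover have "\<forall>k. conn E (S \<union> set (take k (w#ws))) \<and> conn E (V - (S \<union> set (take k (w#ws))))"
    proof
      fix k show "conn E (S \<union> set (take k (w#ws))) \<and> conn E (V - (S \<union> set (take k (w#ws))))"
      proof (cases k)
        case 0 then show ?thesis using less.prems by simp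
      next
        case (Suc k')
        have "S \<union> set (take k (w#ws)) = ?S \<union> set (take k' ws)" using Suc by auto
        then show ?thesis using ws(3) by simp
      qed
    qed
    moreover have "\<forall>k<length (w#ws). v \<notin> set (take k (w#ws))"
    proof (intro allI impI)
      fix k assume k: "k < length (w#ws)"
      show "v \<notin> set (take k (w#ws))"
      proof (cases k)
        case 0 then show ?thesis by simp
      next
        case (Suc k') then show ?thesis using ws(4) k w by auto
      qed
    qed
    ultimately show ?thesis by blast
  qed
qed

lemma cut_reach_in:
  assumes "reach (E - cut E A) x y" "x \<in> A" shows "y \<in> A"
  using assms unfolding reach_def
  by (induction rule: rtranclp_induct) (auto simp: cut_def)

lemma cut_reach_out:
  assumes "reach (E - cut E A) x y" "x \<notin> A" shows "y \<notin> A"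
proof
  assume "y \<in> A"
  have "reach (E - cut E A) y x" using assms(1) by (rule reach_sym)
  then have "x \<in> A" using \<open>y \<in> A\<close> by (rule cut_reach_in)
  then show False using assms(2) by simp
qed

lemma bond_cut:
  assumes sg: "simple_graph V E" and cg: "connected_graph V E"
    and AV: "A \<subseteq> V" and Ane: "A \<noteq> {}" and AnV: "A \<noteq> V"
    and cA: "conn E A" and cB: "conn E (V - A)"
  shows "bond V E (cut E A)"
proof -
  have n1: "num_components V E = 1" using components_conn[OF cg] unfolding num_components_def by simp
  have indA: "ind E A \<subseteq> E - cut E A" unfolding ind_def cut_def by auto
  have indB: "ind E (V - A) \<subseteq> E - cut E A" unfolding ind_def cut_def by auto
  have compA: "{y\<in>V. reach (E - cut E A) x y} = A" if x: "x \<in> A" for x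
  proof
    show "{y\<in>V. reach (E - cut E A) x y} \<subseteq> A" using cut_reach_in[OF _ x] by blast
    show "A \<subseteq> {y\<in>V. reach (E - cut E A) x y}"
    proof
      fix y assume y: "y \<in> A"
      have "reach (ind E A) x y" using cA x y unfolding conn_def by blast
      then have "reach (E - cut E A) x y" using indA by (rule reach_mono)
      then show "y \<in> {y\<in>V. reach (E - cut E A) x y}" using y AV by blast
    qed
  qed
  have compB: "{y\<in>V. reach (E - cut E A) x y} = V - A" if x: "x \<in> V - A" for x
  proof
    show "{y\<in>V. reach (E - cut E A) x y} \<subseteq> V - A" using cut_reach_out[of E A x] x by blast
    show "V - A \<subseteq> {y\<in>V. reach (E - cut E A) x y}"
    proof
      fix y assume y: "y \<in> V - A"
      have "reach (ind E (V - A)) x y" using cB x y unfolding conn_def by blast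
      then have "reach (E - cut E A) x y" using indB by (rule reach_mono)
      then show "y \<in> {y\<in>V. reach (E - cut E A) x y}" using y by blast
    qed
  qed
  have "components V (E - cut E A) = {A, V - A}"
  proof
    show "components V (E - cut E A) \<subseteq> {A, V - A}"
      unfolding components_def using compA compB by blast
    obtain a where a: "a \<in> A" using Ane by blast
    obtain b where b: "b \<in> V - A" using AV AnV by blast
    show "{A, V - A} \<subseteq> components V (E - cut E A)"
      unfolding components_def using compA[OF a] compB[OF b] a b AV by blast
  qed
  moreover have "A \<noteq> V - A" using Ane by blast
  ultimately have n2: "num_components V (E - cut E A) = 2" unfolding num_components_def by simp
  have disc: "disconnecting V E (cut E A)" unfolding disconnecting_def using n1 n2 by (auto simp: cut_def)
  have minimal: "\<not> disconnecting V E F'" if F': "F' \<subset> cut E A" for F'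
  proof -
    obtain c where c: "c \<in> cut E A" "c \<notin> F'" using F' by blast
    obtain p q where pq: "c = {p,q}" "p \<in> V" "q \<in> V" using edge_form[OF sg, of c] c(1) unfolding cut_def by blast
    obtain a b where ab: "{a,b} \<in> cut E A" "{a,b} \<notin> F'" "a \<in> A" "b \<notin> A"
    proof (cases "p \<in> A")
      case True
      then have "q \<notin> A" using c(1) pq(1) unfolding cut_def by auto
      then show ?thesis using that[of p q] True c pq(1) by simp
    next
      case False
      then have "q \<in> A" using c(1) pq(1) unfolding cut_def by auto
      then show ?thesis using that[of q p] False c pq(1) by (simp add: insert_commute)
    qed
    have bV: "b \<in> V" using edge_in[OF sg, of a b] ab(1) unfolding cut_def by simp
    have sub: "E - cut E A \<subseteq> E - F'" using F' by blast
    have eab: "{a,b} \<in> E - F'" using ab unfolding cut_def by simp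
    have ra: "\<forall>x\<in>V. reach (E - F') a x"
    proof
      fix x assume x: "x \<in> V"
      show "reach (E - F') a x"
      proof (cases "x \<in> A")
        case True
        have "reach (E - cut E A) a x" using compA[OF ab(3)] True AV by blast
        then show ?thesis using sub by (rule reach_mono)
      next
        case False
        have "reach (E - cut E A) b x" using compB[of b] bV ab(4) False x by blast
        then have "reach (E - F') b x" using sub by (rule reach_mono)
        moreover have "reach (E - F') a b" using eab by (rule reach_edge)
        ultimately show ?thesis by (rule reach_trans[rotated])
      qed
    qed
    have "connected_graph V (E - F')"
      unfolding connected_graph_def
    proof (intro conjI ballI)
      show "V \<noteq> {}" using AV Ane by blast
      fix x y assume "x \<in> V" "y \<in> V"
      then have 1: "reach (E - F') a x" and 2: "reach (E - F') a y" using ra by simp_all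
      from 1 have "reach (E - F') x a" by (rule reach_sym)
      from this 2 show "reach (E - F') x y" by (rule reach_trans)
    qed
    then have "num_components V (E - F') = 1"
      unfolding num_components_def by (simp add: components_conn)
    then show ?thesis using n1 unfolding disconnecting_def by simp
  qed
  show ?thesis unfolding bond_def using disc minimal by blast
qed



lemma main_L:
  assumes sg: "simple_graph V E" and cg: "connected_graph V E"
    and dL: "distinct L" and sL: "set L = V" and n2: "length L \<ge> 2" and uv: "{u,v} \<in> E"
    and H: "\<And>i. 1 \<le> i \<Longrightarrow> i < length L \<Longrightarrow> conn E (set (take i L)) \<and> conn E (V - set (take i L))
                 \<and> u \<in> set (take i L) \<and> v \<notin> set (take i L)"
  shows "\<exists>F. bond V E F \<and> {u,v} \<in> F \<and> pathwidth V E \<le> card F"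
proof -
  define n where "n = length L"
  define C where "C i = cut E (set (take i L))" for i
  have finE': "finite E" using sg by (rule finE)
  have finC: "finite (C i)" for i using finE' unfolding C_def cut_def by simp
  have ne: "{1..<n} \<noteq> {}" using n2 unfolding n_def by simp
  obtain i0 where i0: "i0 \<in> {1..<n}" and i0max: "\<forall>i\<in>{1..<n}. card (C i) \<le> card (C i0)"
    using fin_argmax[of "{1..<n}", OF _ ne, of "\<lambda>i. card (C i)"] by blast
  define F where "F = C i0"
  define A where "A = set (take i0 L)"
  have hi0: "conn E A" "conn E (V - A)" "u \<in> A" "v \<notin> A"
    using H[of i0] i0 unfolding A_def n_def by auto
  have vV: "v \<in> V" using edge_in[OF sg uv] by simp
  have AV: "A \<subseteq> V" unfolding A_def using sL set_take_subset by metis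
  have bF: "bond V E F" unfolding F_def C_def A_def[symmetric]
    using bond_cut[OF sg cg AV _ _ hi0(1,2)] hi0(3,4) vV by blast
  have uvF: "{u,v} \<in> F" unfolding F_def C_def A_def[symmetric] cut_def using uv hi0(3,4) by auto
  define X where "X i = insert (L!i) {L!j | j. j < i \<and> (\<exists>m. i \<le> m \<and> m < n \<and> {L!j, L!m} \<in> E)}" for i
  define Xs where "Xs = map X [0..<n]"
  have nth_inj: "p = q" if "p < n" "q < n" "L!p = L!q" for p q
    using that dL nth_eq_iff_index_eq unfolding n_def by metis
  have memX: "(L!p \<in> X i) = (p = i \<or> (p < i \<and> (\<exists>m. i \<le> m \<and> m < n \<and> {L!p, L!m} \<in> E)))"
    if ip: "i < n" "p < n" for i p
  proof
    assume "L!p \<in> X i"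
    then consider "L!p = L!i" | j m where "L!p = L!j" "j < i" "i \<le> m" "m < n" "{L!j, L!m} \<in> E"
      unfolding X_def by blast
    then show "p = i \<or> (p < i \<and> (\<exists>m. i \<le> m \<and> m < n \<and> {L!p, L!m} \<in> E))"
    proof cases
      case 1 then show ?thesis using nth_inj ip by blast
    next
      case (2 j m)
      have "p = j" using nth_inj[of p j] 2 ip by simp
      then show ?thesis using 2 by blast
    qed
  next
    assume "p = i \<or> (p < i \<and> (\<exists>m. i \<le> m \<and> m < n \<and> {L!p, L!m} \<in> E))"
    then show "L!p \<in> X i" unfolding X_def by blast
  qed
  have XV: "X i \<subseteq> V" if "i < n" for i
  proof -
    have "L!i \<in> V" using that sL unfolding n_def by auto
    moreover have "L!j \<in> V" if "j < i" for j using that \<open>i < n\<close> sL unfolding n_def by auto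
    ultimately show ?thesis unfolding X_def by blast
  qed
  have pd: "path_decomposition V E Xs"
    unfolding path_decomposition_def
  proof (intro conjI ballI)
    show "Xs \<noteq> []" using n2 unfolding Xs_def n_def by auto
    show "Y \<subseteq> V" if Y: "Y \<in> set Xs" for Y
    proof -
      obtain i where "i < n" "Y = X i" using Y unfolding Xs_def by auto
      then show ?thesis using XV by simp
    qed
  next
    fix x assume x: "x \<in> V"
    then obtain p where p: "p < n" "L!p = x" using sL unfolding n_def by (metis in_set_conv_nth)
    show "\<exists>i<length Xs. x \<in> Xs ! i" using p memX[of p p] unfolding Xs_def by auto
    show "\<forall>i j k. i \<le> j \<and> j \<le> k \<and> k < length Xs \<and> x \<in> Xs ! i \<and> x \<in> Xs ! k \<longrightarrow> x \<in> Xs ! j"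
    proof (intro allI impI)
      fix i j k assume a: "i \<le> j \<and> j \<le> k \<and> k < length Xs \<and> x \<in> Xs ! i \<and> x \<in> Xs ! k"
      have lt: "i < n" "j < n" "k < n" using a unfolding Xs_def by auto
      have xi: "L!p \<in> X i" "L!p \<in> X k" using a lt p unfolding Xs_def by auto
      have 1: "p \<le> i" using memX[OF lt(1) p(1)] xi(1) by auto
      have 2: "p = k \<or> (p < k \<and> (\<exists>m. k \<le> m \<and> m < n \<and> {L!p, L!m} \<in> E))"
        using memX[OF lt(3) p(1)] xi(2) by simp
      have "p = j \<or> (p < j \<and> (\<exists>m. j \<le> m \<and> m < n \<and> {L!p, L!m} \<in> E))"
      proof (cases "p = j")
        case True then show ?thesis by simp
      next
        case False
        then have pj: "p < j" using 1 a by simp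
        have "p \<noteq> k" using pj a by simp
        then obtain m where "k \<le> m" "m < n" "{L!p, L!m} \<in> E" using 2 by blast
        then show ?thesis using pj a by (meson le_trans)
      qed
      then have "L!p \<in> X j" using memX[OF lt(2) p(1)] by simp
      then show "x \<in> Xs ! j" using lt p unfolding Xs_def by simp
    qed
  next
    fix e assume e: "e \<in> E"
    obtain a b where ab: "e = {a,b}" "a \<in> V" "b \<in> V" "a \<noteq> b" using edge_form[OF sg e] by blast
    obtain p where p: "p < n" "L!p = a" using ab sL unfolding n_def by (metis in_set_conv_nth)
    obtain q where q: "q < n" "L!q = b" using ab sL unfolding n_def by (metis in_set_conv_nth)
    have pq: "p \<noteq> q" using p q ab by auto
    show "\<exists>i<length Xs. e \<subseteq> Xs ! i"
    proof (cases "p < q")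
      case True
      have "L!q \<in> X q" using memX[OF q(1) q(1)] by simp
      moreover have "L!p \<in> X q" using memX[OF q(1) p(1)] True q(1) e ab p q by auto
      ultimately show ?thesis using q p ab unfolding Xs_def by auto
    next
      case False
      then have qp: "q < p" using pq by simp
      have "L!p \<in> X p" using memX[OF p(1) p(1)] by simp
      moreover have "{L!q, L!p} \<in> E" using e ab p q by (simp add: insert_commute)
      then have "L!q \<in> X p" using memX[OF p(1) q(1)] qp p(1) by auto
      ultimately show ?thesis using q p ab unfolding Xs_def by auto
    qed
  qed
  have width: "card (X i) \<le> card F + 1" if i: "i < n" for i
  proof (cases "i = 0")
    case True
    then have "X i = {L!0}" unfolding X_def by simp
    then show ?thesis by simp
  next
    case False
    define Y where "Y = {L!j | j. j < i \<and> (\<exists>m. i \<le> m \<and> m < n \<and> {L!j, L!m} \<in> E)}"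
    have finY: "finite Y" using XV[OF i] sg unfolding X_def Y_def simple_graph_def
      by (meson finite_insert finite_subset)
    have "Y \<subseteq> (\<lambda>e. the_elem (e \<inter> set (take i L))) ` C i"
    proof
      fix y assume "y \<in> Y"
      then obtain j m where jm: "y = L!j" "j < i" "i \<le> m" "m < n" "{L!j, L!m} \<in> E"
        unfolding Y_def by blast
      have jin: "L!j \<in> set (take i L)" using jm i unfolding n_def
        by (metis in_set_conv_nth length_take min.absorb4 min_less_iff_conj nth_take)
      have mout: "L!m \<notin> set (take i L)"
      proof
        assume "L!m \<in> set (take i L)"
        then obtain q where q: "q < length (take i L)" "take i L ! q = L!m" by (metis in_set_conv_nth)
        have "q < i" "L!q = L!m" using q by auto
        then have "q = m" using nth_inj[of q m] jm i by simp
        then show False using \<open>q < i\<close> jm by simp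
      qed
      have "{L!j, L!m} \<inter> set (take i L) = {L!j}" using jin mout by auto
      moreover have "{L!j, L!m} \<in> C i" unfolding C_def cut_def using jm(5) jin mout by auto
      ultimately show "y \<in> (\<lambda>e. the_elem (e \<inter> set (take i L))) ` C i"
        using jm(1) by (metis (no_types, lifting) image_eqI the_elem_eq)
    qed
    then have "card Y \<le> card ((\<lambda>e. the_elem (e \<inter> set (take i L))) ` C i)"
      using finC by (intro card_mono) auto
    also have "\<dots> \<le> card (C i)" using finC by (rule card_image_le)
    also have "\<dots> \<le> card F" using i0max False i unfolding F_def by auto
    finally have "card Y \<le> card F" .
    moreover have "X i = insert (L!i) Y" unfolding X_def Y_def by simp
    ultimately show ?thesis using finY by (simp add: card_insert_if)
  qed
  have "set Xs = X ` {0..<n}" unfolding Xs_def by simp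
  then have "Max (card ` set Xs) \<le> card F + 1"
    using width ne by (subst Max_le_iff) auto
  then have pw: "pd_width Xs \<le> card F" unfolding pd_width_def by simp
  have "pathwidth V E \<le> pd_width Xs" unfolding pathwidth_def
    by (rule Least_le) (use pd in blast)
  then show ?thesis using pw bF uvF by (intro exI[of _ F]) auto
qed



theorem theorem1p4:
  fixes V :: "'a set" and E :: "'a set set"
  assumes "simple_graph V E" and "two_connected V E"
  shows "(\<forall>e\<in>E. \<exists>F. bond V E F \<and> e \<in> F \<and> pathwidth V E \<le> 3 * card F - 2)
         \<and> pathwidth V E \<le> 3 * cocircumference V E - 2"
proof -
  have sg: "simple_graph V E" and tc: "two_connected V E" using assms by auto
  have cg: "connected_graph V E" using tc unfolding two_connected_def by blast
  have finV: "finite V" using sg unfolding simple_graph_def by simp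
  have finE': "finite E" using sg by (rule finE)
  have c3: "card V \<ge> 3" using tc unfolding two_connected_def by blast
  have bondfin: "finite F \<and> card F \<le> card E" if "bond V E F" for F
  proof -
    have "F \<subseteq> E" using that unfolding bond_def disconnecting_def by blast
    then show ?thesis using finE' by (meson card_mono finite_subset)
  qed
  have part1: "\<forall>e\<in>E. \<exists>F. bond V E F \<and> e \<in> F \<and> pathwidth V E \<le> 3 * card F - 2"
  proof
    fix e assume e: "e \<in> E"
    obtain u v where uv: "e = {u,v}" "u \<in> V" "v \<in> V" "u \<noteq> v" using edge_form[OF sg e] by blast
    have cu: "conn E {u}" by (rule conn_root[where r=u]) (simp add: reach_refl)
    have indu: "ind E (V - {u}) = {e\<in>E. u \<notin> e}"
      unfolding ind_def using edge_sub[OF sg] by blast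
    have "connected_graph (V - {u}) {e\<in>E. u \<notin> e}" using tc uv(2) unfolding two_connected_def by blast
    then have cVu: "conn E (V - {u})" unfolding conn_def connected_graph_def indu by blast
    obtain ws where ws: "distinct ws" "set ws = V - {u}"
        "\<forall>k. conn E ({u} \<union> set (take k ws)) \<and> conn E (V - ({u} \<union> set (take k ws)))"
        "\<forall>k<length ws. v \<notin> set (take k ws)"
      using build[OF sg tc refl, where S="{u}" and u=u and v=v] uv cu cVu by auto
    define L where "L = u # ws"
    have dL: "distinct L" using ws unfolding L_def by simp
    have sL: "set L = V" using ws uv unfolding L_def by auto
    have "length ws = card (V - {u})" using ws(1,2) distinct_card by metis
    moreover have "card V > 0" using uv(2) finV card_gt_0_iff by blast
    ultimately have "length L = card V" using uv(2) finV unfolding L_def by simp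
    then have n2: "length L \<ge> 2" using c3 by simp
    have H: "conn E (set (take i L)) \<and> conn E (V - set (take i L)) \<and> u \<in> set (take i L) \<and> v \<notin> set (take i L)"
      if i: "1 \<le> i" "i < length L" for i
    proof -
      obtain k where k: "i = Suc k" using i by (cases i) auto
      have "set (take i L) = {u} \<union> set (take k ws)" unfolding L_def k by simp
      moreover have "k < length ws" using i k unfolding L_def by simp
      ultimately show ?thesis using ws(3,4) uv(4) by auto
    qed
    obtain F where F: "bond V E F" "{u,v} \<in> F" "pathwidth V E \<le> card F"
      using main_L[OF sg cg dL sL n2 _ H] e uv(1) by blast
    have "card F \<ge> 1" using F(2) bondfin[OF F(1)] by (metis One_nat_def Suc_leI card_gt_0_iff empty_iff)
    then have "pathwidth V E \<le> 3 * card F - 2" using F(3) by linarith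
    then show "\<exists>F. bond V E F \<and> e \<in> F \<and> pathwidth V E \<le> 3 * card F - 2" using F uv(1) by blast
  qed
  have "E \<noteq> {}"
  proof
    assume E0: "E = {}"
    obtain x where x: "x \<in> V" using c3 by fastforce
    obtain y where y: "y \<in> V" "y \<noteq> x"
    proof -
      have "card (V - {x}) \<ge> 2" using c3 x finV by simp
      then have "V - {x} \<noteq> {}" by fastforce
      then show ?thesis using that by blast
    qed
    have "reach E x y" using cg x y unfolding connected_graph_def by blast
    then obtain a b where "{a,b} \<in> E" using crossing[of E x y "{x}"] y by blast
    then show False using E0 by simp
  qed
  then obtain e where "e \<in> E" by blast
  then obtain F where F: "bond V E F" "pathwidth V E \<le> 3 * card F - 2" using part1 by blast
  have "finite {card F | F. bond V E F}"
    by (rule finite_subset[of _ "{..card E}"]) (use bondfin in auto)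
  then have "card F \<le> cocircumference V E" unfolding cocircumference_def using F(1)
    by (intro Max_ge) auto
  then have "pathwidth V E \<le> 3 * cocircumference V E - 2" using F(2) by linarith
  then show ?thesis using part1 by blast
qed


end
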